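(* Let $G$ be a finite group, let $s: G \to \mathbb{Z}_2=\{0,1\}$ be a group homomorphism, and let $\lambda: G\times G\to \mathbb{Z}_2$ be a 2-cocycle (i.e. $\lambda(\mathbf{h},\mathbf{k})-\lambda(\mathbf{g}\mathbf{h},\mathbf{k})+\lambda(\mathbf{g},\mathbf{h}\mathbf{k})-\lambda(\mathbf{g},\mathbf{h})=0 \bmod 2$ for all $\mathbf{g},\mathbf{h},\mathbf{k}\in G$) normalized so that $\lambda(\mathbf{1},\mathbf{g})=\lambda(\mathbf{g},\mathbf{1})=0$. Let $G_f=\{\mathbf{g}_\sigma : \mathbf{g}\in G,\ \sigma\in\mathbb{Z}_2\}$ with multiplication $\mathbf{g}_\sigma\mathbf{h}_\tau=(\mathbf{g}\mathbf{h})_{\sigma+\tau+\lambda(\mathbf{g},\mathbf{h})}$, and put $P_f=\mathbf{1}_1$ and $s(\mathbf{g}_\sigma)=s(\mathbf{g})$. Then the following are equivalent: (i) there is NO function $U: G_f\to U(1)$ with $U(\mathbf{1}_0)=1$, $U(P_f)=-1$, and $U(\mathbf{g}_\sigma)\,K^{s(\mathbf{g})}[U(\mathbf{h}_\tau)] = U\big((\mathbf{g}\mathbf{h})_{\sigma+\tau+\lambda(\mathbf{g},\mathbf{h})}\big)$ for all $\mathbf{g}_\sigma,\mathbf{h}_\tau\in G_f$ (i.e. no one-dimensional unitary/antiunitary representation $\mathbf{g}_\sigma\mapsto U(\mathbf{g}_\sigma)K^{s(\mathbf{g})}$ of $G_f$ in which $P_f$ acts as $-1$); (ii) the function $(\mathbf{g},\mathbf{h})\mapsto(-1)^{\lambda(\mathbf{g},\mathbf{h})}$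 represents a non-trivial class in $\mathcal{H}^2(G,U_T(1))$.
   Context: $K$ denotes complex conjugation, $K[z]=\bar z$, and $K^0$ is the identity; $s(\mathbf{g})=1$ means $\mathbf{g}$ acts antiunitarily. $\mathcal{H}^2(G,U_T(1))$ is the second cohomology group of $G$ with coefficients in $U(1)$ on which $\mathbf{g}$ acts by $z\mapsto K^{s(\mathbf{g})}[z]$: a 2-cocycle is a function $\alpha:G\times G\to U(1)$ with $\alpha(\mathbf{g},\mathbf{h})\alpha(\mathbf{g}\mathbf{h},\mathbf{k})=\alpha(\mathbf{g},\mathbf{h}\mathbf{k})K^{s(\mathbf{g})}[\alpha(\mathbf{h},\mathbf{k})]$, and it is trivial if $\alpha(\mathbf{g},\mathbf{h})=\epsilon(\mathbf{g})K^{s(\mathbf{g})}[\epsilon(\mathbf{h})]/\epsilon(\mathbf{g}\mathbf{h})$ for some function $\epsilon:G\to U(1)$. In the paper, condition (i) is phrased as "$G_f$ is enforced to break by the 0D complex-fermion invertible topological order" (a unique ground state that is odd under the fermion parity $P_f$). *)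

theory Defs
  imports "HOL-Algebra.Group" "HOL-Analysis.Analysis"
begin

text \<open>Z2 = {0,1} is modelled by bool, with addition = exclusive or (\<noteq>) and
  0 = False, 1 = True.\<close>

definition Kpow :: "bool \<Rightarrow> complex \<Rightarrow> complex" where
  "Kpow b z = (if b then cnj z else z)"

definition Z2_hom :: "('a, 'b) monoid_scheme \<Rightarrow> ('a \<Rightarrow> bool) \<Rightarrow> bool" where
  "Z2_hom G s \<longleftrightarrow> (\<forall>g\<in>carrier G. \<forall>h\<in>carrier G. s (g \<otimes>\<^bsub>G\<^esub> h) = (s g \<noteq> s h))"

definition normalized_Z2_cocycle :: "('a, 'b) monoid_scheme \<Rightarrow> ('a \<Rightarrow> 'a \<Rightarrow> bool) \<Rightarrow> bool" where
  "normalized_Z2_cocycle G lam \<longleftrightarrow>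
     (\<forall>g\<in>carrier G. \<forall>h\<in>carrier G. \<forall>k\<in>carrier G.
        ((lam h k \<noteq> lam (g \<otimes>\<^bsub>G\<^esub> h) k) \<noteq> (lam g (h \<otimes>\<^bsub>G\<^esub> k) \<noteq> lam g h)) = False)
   \<and> (\<forall>g\<in>carrier G. lam \<one>\<^bsub>G\<^esub> g = False \<and> lam g \<one>\<^bsub>G\<^esub> = False)"

definition Gf_mult :: "('a, 'b) monoid_scheme \<Rightarrow> ('a \<Rightarrow> 'a \<Rightarrow> bool) \<Rightarrow> 'a \<times> bool \<Rightarrow> 'a \<times> bool \<Rightarrow> 'a \<times> bool" where
  "Gf_mult G lam x y = (fst x \<otimes>\<^bsub>G\<^esub> fst y, (snd x \<noteq> snd y) \<noteq> lam (fst x) (fst y))"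

definition odd_1d_rep :: "('a, 'b) monoid_scheme \<Rightarrow> ('a \<Rightarrow> bool) \<Rightarrow> ('a \<Rightarrow> 'a \<Rightarrow> bool)
    \<Rightarrow> ('a \<times> bool \<Rightarrow> complex) \<Rightarrow> bool" where
  "odd_1d_rep G s lam U \<longleftrightarrow>
     (\<forall>g\<in>carrier G. \<forall>\<sigma>. cmod (U (g, \<sigma>)) = 1)
   \<and> U (\<one>\<^bsub>G\<^esub>, False) = 1
   \<and> U (\<one>\<^bsub>G\<^esub>, True) = -1
   \<and> (\<forall>g\<in>carrier G. \<forall>h\<in>carrier G. \<forall>\<sigma> \<tau>.
        U (g, \<sigma>) * Kpow (s g) (U (h, \<tau>)) = U (Gf_mult G lam (g, \<sigma>) (h, \<tau>)))"

definition UT_coboundary :: "('a, 'b) monoid_scheme \<Rightarrow> ('a \<Rightarrow> bool) \<Rightarrow> ('a \<Rightarrow> 'a \<Rightarrow> complex) \<Rightarrow> bool" where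
  "UT_coboundary G s alpha \<longleftrightarrow>
     (\<exists>eps :: 'a \<Rightarrow> complex. (\<forall>g\<in>carrier G. cmod (eps g) = 1) \<and>
        (\<forall>g\<in>carrier G. \<forall>h\<in>carrier G.
           alpha g h = eps g * Kpow (s g) (eps h) / eps (g \<otimes>\<^bsub>G\<^esub> h)))"

definition UT_cocycle :: "('a, 'b) monoid_scheme \<Rightarrow> ('a \<Rightarrow> bool) \<Rightarrow> ('a \<Rightarrow> 'a \<Rightarrow> complex) \<Rightarrow> bool" where
  "UT_cocycle G s alpha \<longleftrightarrow>
     (\<forall>g\<in>carrier G. \<forall>h\<in>carrier G. cmod (alpha g h) = 1) \<and>
     (\<forall>g\<in>carrier G. \<forall>h\<in>carrier G. \<forall>k\<in>carrier G.
        alpha g h * alpha (g \<otimes>\<^bsub>G\<^esub> h) k = alpha g (h \<otimes>\<^bsub>G\<^esub> k) * Kpow (s g) (alpha h k))"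

definition nontrivial_H2_UT :: "('a, 'b) monoid_scheme \<Rightarrow> ('a \<Rightarrow> bool) \<Rightarrow> ('a \<Rightarrow> 'a \<Rightarrow> complex) \<Rightarrow> bool" where
  "nontrivial_H2_UT G s alpha \<longleftrightarrow> UT_cocycle G s alpha \<and> \<not> UT_coboundary G s alpha"

end

theory Submission
  imports Defs
begin

lemma Kpow_sign: "Kpow b (if c then -1 else 1) = (if c then -1 else 1)"
  by (simp add: Kpow_def)

lemma Kpow_neg: "Kpow b (- z) = - Kpow b z"
  by (simp add: Kpow_def)

theorem mainTheorem1:
  fixes G :: "('a, 'b) monoid_scheme"
    and s :: "'a \<Rightarrow> bool"
    and lam :: "'a \<Rightarrow> 'a \<Rightarrow> bool"
  assumes "group G"
    and "finite (carrier G)"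
    and "Z2_hom G s"
    and "normalized_Z2_cocycle G lam"
  shows "(\<not> (\<exists>U. odd_1d_rep G s lam U)) \<longleftrightarrow>
         nontrivial_H2_UT G s (\<lambda>g h. if lam g h then -1 else 1)"
proof -
  interpret group G by (rule assms(1))
  define alpha where "alpha = (\<lambda>g h. if lam g h then -1 else (1::complex))"
  have cz: "\<And>g h k. g \<in> carrier G \<Longrightarrow> h \<in> carrier G \<Longrightarrow> k \<in> carrier G \<Longrightarrow>
      ((lam h k \<noteq> lam (g \<otimes>\<^bsub>G\<^esub> h) k) \<noteq> (lam g (h \<otimes>\<^bsub>G\<^esub> k) \<noteq> lam g h)) = False"
    using assms(4) unfolding normalized_Z2_cocycle_def by blast
  have ln: "\<And>g. g \<in> carrier G \<Longrightarrow> lam \<one>\<^bsub>G\<^esub> g = False \<and> lam g \<one>\<^bsub>G\<^esub> = False"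
    using assms(4) unfolding normalized_Z2_cocycle_def by blast
  have s1: "s \<one>\<^bsub>G\<^esub> = False"
    using assms(3) unfolding Z2_hom_def by (metis one_closed r_one)
  have coc: "UT_cocycle G s alpha"
    unfolding UT_cocycle_def alpha_def
  proof (intro conjI ballI)
    fix g h k assume g: "g \<in> carrier G" and h: "h \<in> carrier G" and k: "k \<in> carrier G"
    have "((lam h k \<noteq> lam (g \<otimes>\<^bsub>G\<^esub> h) k) \<noteq> (lam g (h \<otimes>\<^bsub>G\<^esub> k) \<noteq> lam g h)) = False"
      using cz g h k by blast
    then show "(if lam g h then -1 else 1) * (if lam (g \<otimes>\<^bsub>G\<^esub> h) k then -1 else 1) =
      (if lam g (h \<otimes>\<^bsub>G\<^esub> k) then -1 else 1) * Kpow (s g) (if lam h k then -1 else (1::complex))"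
      by (simp add: Kpow_sign split: if_splits) blast
  qed simp
  have "(\<exists>U. odd_1d_rep G s lam U) \<longleftrightarrow> UT_coboundary G s alpha"
  proof
    assume "\<exists>U. odd_1d_rep G s lam U"
    then obtain U where U: "odd_1d_rep G s lam U" by blast
    have Un: "\<And>g \<sigma>. g \<in> carrier G \<Longrightarrow> cmod (U (g, \<sigma>)) = 1"
      and U1: "U (\<one>\<^bsub>G\<^esub>, True) = -1"
      and Um: "\<And>g h \<sigma> \<tau>. g \<in> carrier G \<Longrightarrow> h \<in> carrier G \<Longrightarrow>
          U (g, \<sigma>) * Kpow (s g) (U (h, \<tau>)) = U (Gf_mult G lam (g, \<sigma>) (h, \<tau>))"
      using U unfolding odd_1d_rep_def by blast+
    have UT: "U (x, True) = - U (x, False)" if x: "x \<in> carrier G" for x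
    proof -
      have "U (\<one>\<^bsub>G\<^esub>, True) * Kpow (s \<one>\<^bsub>G\<^esub>) (U (x, False)) = U (Gf_mult G lam (\<one>\<^bsub>G\<^esub>, True) (x, False))"
        using Um x by blast
      then show ?thesis using x ln[OF x] s1 U1 by (simp add: Gf_mult_def Kpow_def)
    qed
    show "UT_coboundary G s alpha"
      unfolding UT_coboundary_def
    proof (intro exI[of _ "\<lambda>g. U (g, False)"] conjI ballI)
      fix g assume "g \<in> carrier G" then show "cmod (U (g, False)) = 1" using Un by blast
    next
      fix g h assume g: "g \<in> carrier G" and h: "h \<in> carrier G"
      have e: "U (g, False) * Kpow (s g) (U (h, False)) = U (g \<otimes>\<^bsub>G\<^esub> h, lam g h)"
        using Um[OF g h, of False False] by (simp add: Gf_mult_def)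
      have nz: "U (g \<otimes>\<^bsub>G\<^esub> h, False) \<noteq> 0" using Un[of "g \<otimes>\<^bsub>G\<^esub> h" False] g h by auto
      show "alpha g h = U (g, False) * Kpow (s g) (U (h, False)) / U (g \<otimes>\<^bsub>G\<^esub> h, False)"
        unfolding e alpha_def using UT[of "g \<otimes>\<^bsub>G\<^esub> h"] g h nz by auto
    qed
  next
    assume "UT_coboundary G s alpha"
    then obtain eps where en: "\<And>g. g \<in> carrier G \<Longrightarrow> cmod (eps g) = 1"
      and ee: "\<And>g h. g \<in> carrier G \<Longrightarrow> h \<in> carrier G \<Longrightarrow>
           alpha g h = eps g * Kpow (s g) (eps h) / eps (g \<otimes>\<^bsub>G\<^esub> h)"
      unfolding UT_coboundary_def by blast
    have e1: "eps \<one>\<^bsub>G\<^esub> = 1"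
    proof -
      have "alpha \<one>\<^bsub>G\<^esub> \<one>\<^bsub>G\<^esub> = eps \<one>\<^bsub>G\<^esub> * Kpow (s \<one>\<^bsub>G\<^esub>) (eps \<one>\<^bsub>G\<^esub>) / eps (\<one>\<^bsub>G\<^esub> \<otimes>\<^bsub>G\<^esub> \<one>\<^bsub>G\<^esub>)" using ee by simp
      moreover have "eps \<one>\<^bsub>G\<^esub> \<noteq> 0" using en[of "\<one>\<^bsub>G\<^esub>"] by auto
      ultimately show ?thesis using ln[of "\<one>\<^bsub>G\<^esub>"] s1 by (simp add: alpha_def Kpow_def)
    qed
    have ee': "eps g * Kpow (s g) (eps h) = alpha g h * eps (g \<otimes>\<^bsub>G\<^esub> h)"
      if g: "g \<in> carrier G" and h: "h \<in> carrier G" for g h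
    proof -
      have "eps (g \<otimes>\<^bsub>G\<^esub> h) \<noteq> 0" using en[of "g \<otimes>\<^bsub>G\<^esub> h"] g h by auto
      then show ?thesis using ee[OF g h] by (simp add: field_simps)
    qed
    define U where "U = (\<lambda>(g, \<sigma>). if \<sigma> then - eps g else eps g)"
    have "odd_1d_rep G s lam U"
      unfolding odd_1d_rep_def
    proof (intro conjI ballI allI)
      fix g \<sigma> assume "g \<in> carrier G" then show "cmod (U (g, \<sigma>)) = 1"
        using en by (simp add: U_def)
    next
      show "U (\<one>\<^bsub>G\<^esub>, False) = 1" using e1 by (simp add: U_def)
    next
      show "U (\<one>\<^bsub>G\<^esub>, True) = -1" using e1 by (simp add: U_def)
    next
      fix g h \<sigma> \<tau> assume g: "g \<in> carrier G" and h: "h \<in> carrier G"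
      show "U (g, \<sigma>) * Kpow (s g) (U (h, \<tau>)) = U (Gf_mult G lam (g, \<sigma>) (h, \<tau>))"
        using ee'[OF g h] by (auto simp: U_def Gf_mult_def Kpow_neg alpha_def)
    qed
    then show "\<exists>U. odd_1d_rep G s lam U" by blast
  qed
  then show ?thesis
    unfolding nontrivial_H2_UT_def alpha_def[symmetric] using coc by blast
qed

end
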